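(* Let $T=(V_T,E_T)$ be a finite tree, $r\in V_T$, $Q\subseteq V_T$ non-empty, and $Q'=Q\cup A_Q$ as defined below. Every $Q'$-centroid decomposition tree of $T$ has height $O(\log|Q|)$.
   Context: Root $T$ at $r$, let $V_Q$ be the set of nodes whose subtree contains a node of $Q$, $T_Q$ the subtree induced by $V_Q$, $A_Q=\{u\in V_Q:\deg_{T_Q}(u)\ge 3\}$ and $Q'=Q\cup A_Q$. For a tree $Z$ and $W\subseteq V_Z$, a node $u\in W$ is a $W$-centroid of $Z$ if every component of $Z-u$ contains at most $|W|/2$ nodes of $W$. A $Q'$-centroid decomposition tree $\mathcal D(T)=(Q',E_D)$ is obtained recursively: starting with $Z=T$ and $W=Q'$, choose a $W$-centroid $c$ of $Z$, remove it, and recurse on every component $Z'$ of $Z-c$ that contains a node of $W$ (with $W\cap V(Z')$ in place of $W$); for every recursion other than the first, $E_D$ contains an edge between the centroid chosen in that recursion and the centroid chosen in the calling recursion. (Such centroids always exist, and at each step there may be two to choose from.) *)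

theory Defs
  imports Complex_Main
begin

definition adj_rel :: "'a set \<Rightarrow> 'a set set \<Rightarrow> ('a \<times> 'a) set" where
  "adj_rel V E = {(a, b). a \<in> V \<and> b \<in> V \<and> {a, b} \<in> E}"

definition connected_in :: "'a set \<Rightarrow> 'a set set \<Rightarrow> 'a \<Rightarrow> 'a \<Rightarrow> bool" where
  "connected_in V E x y \<longleftrightarrow> x \<in> V \<and> y \<in> V \<and> (x, y) \<in> (adj_rel V E)\<^sup>*"

definition is_graph :: "'a set \<Rightarrow> 'a set set \<Rightarrow> bool" where
  "is_graph V E \<longleftrightarrow> finite V \<and> (\<forall>e\<in>E. \<exists>a b. a \<in> V \<and> b \<in> V \<and> a \<noteq> b \<and> e = {a, b})"

(* a tree: nonempty finite graph, connected and acyclic (every edge is a bridge) *)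
definition is_tree :: "'a set \<Rightarrow> 'a set set \<Rightarrow> bool" where
  "is_tree V E \<longleftrightarrow> is_graph V E \<and> V \<noteq> {} \<and>
     (\<forall>x\<in>V. \<forall>y\<in>V. connected_in V E x y) \<and>
     (\<forall>a b. {a, b} \<in> E \<longrightarrow> \<not> connected_in V (E - {{a, b}}) a b)"

definition component :: "'a set \<Rightarrow> 'a set set \<Rightarrow> 'a \<Rightarrow> 'a set" where
  "component V E x = {y. connected_in V E x y}"

definition components :: "'a set \<Rightarrow> 'a set set \<Rightarrow> 'a set set" where
  "components V E = component V E ` V"

definition del_vertex_V :: "'a set \<Rightarrow> 'a \<Rightarrow> 'a set" where
  "del_vertex_V V u = V - {u}"

definition del_vertex_E :: "'a set set \<Rightarrow> 'a \<Rightarrow> 'a set set" where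
  "del_vertex_E E u = {e \<in> E. u \<notin> e}"

definition induced_E :: "'a set set \<Rightarrow> 'a set \<Rightarrow> 'a set set" where
  "induced_E E S = {e \<in> E. e \<subseteq> S}"

(* rooted at r: v lies in the subtree of u iff u lies on the r-v path *)
definition in_subtree :: "'a set \<Rightarrow> 'a set set \<Rightarrow> 'a \<Rightarrow> 'a \<Rightarrow> 'a \<Rightarrow> bool" where
  "in_subtree V E r u v \<longleftrightarrow> u \<in> V \<and> v \<in> V \<and>
     (u = r \<or> u = v \<or> \<not> connected_in (del_vertex_V V u) (del_vertex_E E u) r v)"

definition VQ :: "'a set \<Rightarrow> 'a set set \<Rightarrow> 'a \<Rightarrow> 'a set \<Rightarrow> 'a set" where
  "VQ V E r Q = {u \<in> V. \<exists>q\<in>Q. in_subtree V E r u q}"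

definition degree_in :: "'a set set \<Rightarrow> 'a \<Rightarrow> nat" where
  "degree_in E u = card {e \<in> E. u \<in> e}"

definition AQ :: "'a set \<Rightarrow> 'a set set \<Rightarrow> 'a \<Rightarrow> 'a set \<Rightarrow> 'a set" where
  "AQ V E r Q = {u \<in> VQ V E r Q. degree_in (induced_E E (VQ V E r Q)) u \<ge> 3}"

definition Qprime :: "'a set \<Rightarrow> 'a set set \<Rightarrow> 'a \<Rightarrow> 'a set \<Rightarrow> 'a set" where
  "Qprime V E r Q = Q \<union> AQ V E r Q"

definition is_centroid :: "'a set \<Rightarrow> 'a set set \<Rightarrow> 'a set \<Rightarrow> 'a \<Rightarrow> bool" where
  "is_centroid V E W u \<longleftrightarrow> u \<in> W \<and>
     (\<forall>C \<in> components (del_vertex_V V u) (del_vertex_E E u). 2 * card (C \<inter> W) \<le> card W)"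

(* cdt V E W c D: D is an edge set on W forming a W-centroid decomposition tree of
   Z = (V, E), whose first chosen centroid (root) is c. *)
inductive cdt :: "'a set \<Rightarrow> 'a set set \<Rightarrow> 'a set \<Rightarrow> 'a \<Rightarrow> 'a set set \<Rightarrow> bool" where
  step: "\<lbrakk> is_centroid V E W c;
           \<forall>C \<in> {C \<in> components (del_vertex_V V c) (del_vertex_E E c). C \<inter> W \<noteq> {}}.
              cdt C (induced_E E C) (W \<inter> C) (rt C) (ed C) \<rbrakk>
         \<Longrightarrow> cdt V E W c
               (\<Union>C \<in> {C \<in> components (del_vertex_V V c) (del_vertex_E E c). C \<inter> W \<noteq> {}}.
                   insert {c, rt C} (ed C))"

definition is_walk :: "'a set set \<Rightarrow> 'a list \<Rightarrow> bool" where
  "is_walk D p \<longleftrightarrow> p \<noteq> [] \<and> (\<forall>i. Suc i < length p \<longrightarrow> {p ! i, p ! Suc i} \<in> D)"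

definition dist :: "'a set set \<Rightarrow> 'a \<Rightarrow> 'a \<Rightarrow> nat" where
  "dist D x y = (LEAST n. \<exists>p. is_walk D p \<and> hd p = x \<and> last p = y \<and> length p = Suc n)"

definition tree_height :: "'a set \<Rightarrow> 'a set set \<Rightarrow> 'a \<Rightarrow> nat" where
  "tree_height W D c = Max ((\<lambda>v. dist D c v) ` W)"

end

theory Submission
  imports Defs
begin

abbreviation cav where "cav V E u a b \<equiv> connected_in (del_vertex_V V u) (del_vertex_E E u) a b"

lemma conn_sym: "connected_in V E x y \<Longrightarrow> connected_in V E y x"
proof -
  assume a: "connected_in V E x y"
  have "sym (adj_rel V E)" by (auto simp: sym_def adj_rel_def insert_commute)
  hence "sym ((adj_rel V E)\<^sup>*)" by (rule sym_rtrancl)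
  thus ?thesis using a unfolding connected_in_def by (meson symD)
qed

lemma conn_trans: "connected_in V E x y \<Longrightarrow> connected_in V E y z \<Longrightarrow> connected_in V E x z"
  unfolding connected_in_def by auto

lemma conn_refl: "x \<in> V \<Longrightarrow> connected_in V E x x"
  unfolding connected_in_def by auto

lemma conn_edge: "{a,b} \<in> E \<Longrightarrow> a \<in> V \<Longrightarrow> b \<in> V \<Longrightarrow> connected_in V E a b"
  unfolding connected_in_def by (auto simp: adj_rel_def)

lemma adj_del: "(a,b) \<in> adj_rel (del_vertex_V V u) (del_vertex_E E u) \<longleftrightarrow> (a,b) \<in> adj_rel V E \<and> a \<noteq> u \<and> b \<noteq> u"
  by (auto simp: adj_rel_def del_vertex_V_def del_vertex_E_def)

lemma cav_edge: "{a,b} \<in> E \<Longrightarrow> a \<in> V \<Longrightarrow> b \<in> V \<Longrightarrow> a \<noteq> u \<Longrightarrow> b \<noteq> u \<Longrightarrow> cav V E u a b"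
  by (rule conn_edge) (auto simp: del_vertex_V_def del_vertex_E_def)

lemma cav_V: "cav V E u a b \<Longrightarrow> a \<in> V \<and> b \<in> V \<and> a \<noteq> u \<and> b \<noteq> u"
  by (auto simp: connected_in_def del_vertex_V_def)

lemma cav_mono: assumes "cav V E x a b" "x \<in> e" shows "connected_in V (E - {e}) a b"
proof -
  have "adj_rel (del_vertex_V V x) (del_vertex_E E x) \<subseteq> adj_rel V (E - {e})"
    using assms(2) by (auto simp: adj_rel_def del_vertex_V_def del_vertex_E_def)
  thus ?thesis using assms(1) unfolding connected_in_def
    by (auto simp: del_vertex_V_def dest: rtrancl_mono[THEN subsetD, rotated])
qed

lemma rt_end: "(a,b) \<in> (adj_rel V' E')\<^sup>* \<Longrightarrow> b = a \<or> b \<in> V'"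
  by (erule rtranclE) (auto simp: adj_rel_def)

lemma rt_start: "(a,b) \<in> (adj_rel V' E')\<^sup>* \<Longrightarrow> b = a \<or> a \<in> V'"
  by (erule converse_rtranclE) (auto simp: adj_rel_def)

lemma last_step:
  assumes "connected_in V E r v" "r \<noteq> v"
  shows "\<exists>x. cav V E v r x \<and> {x,v} \<in> E \<and> x \<in> V"
proof -
  let ?R = "adj_rel V E"
  let ?Rv = "adj_rel (del_vertex_V V v) (del_vertex_E E v)"
  have rv: "r \<in> del_vertex_V V v" using assms by (auto simp: connected_in_def del_vertex_V_def)
  have notv: "(r, v) \<notin> ?Rv\<^sup>*"
  proof
    assume "(r, v) \<in> ?Rv\<^sup>*"
    from rt_end[OF this] assms(2) show False by (auto simp: del_vertex_V_def)
  qed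
  have "(r,y) \<in> ?R\<^sup>* \<Longrightarrow> (r,y) \<in> ?Rv\<^sup>* \<or> (\<exists>x. (r,x) \<in> ?Rv\<^sup>* \<and> (x,v) \<in> ?R)" for y
  proof (induction rule: rtrancl_induct)
    case base then show ?case by simp
  next
    case (step y z)
    show ?case
    proof (cases "(r,y) \<in> ?Rv\<^sup>*")
      case True
      show ?thesis
      proof (cases "z = v")
        case True
        then show ?thesis using \<open>(r,y) \<in> ?Rv\<^sup>*\<close> step(2) by blast
      next
        case False
        have "y \<noteq> v" using True notv by auto
        hence "(y,z) \<in> ?Rv" using False step(2) by (simp add: adj_del)
        then show ?thesis using True by (meson rtrancl_into_rtrancl)
      qed
    next
      case False
      then show ?thesis using step(3) by blast
    qed
  qed
  hence "\<exists>x. (r,x) \<in> ?Rv\<^sup>* \<and> (x,v) \<in> ?R" using assms(1) notv unfolding connected_in_def by blast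
  then obtain x where x: "(r,x) \<in> ?Rv\<^sup>*" "(x,v) \<in> ?R" by blast
  have "x \<in> del_vertex_V V v" using rt_end[OF x(1)] rv by auto
  then show ?thesis using x rv by (auto simp: connected_in_def adj_rel_def)
qed

lemma split_path:
  assumes "cav V E x a b" "\<not> cav V E u a b" "a \<noteq> u"
  shows "cav V E x u b"
proof -
  let ?Rx = "adj_rel (del_vertex_V V x) (del_vertex_E E x)"
  let ?Ru = "adj_rel (del_vertex_V V u) (del_vertex_E E u)"
  have "(a,y) \<in> ?Rx\<^sup>* \<Longrightarrow> (a,y) \<in> ?Ru\<^sup>* \<or> (u,y) \<in> ?Rx\<^sup>*" for y
  proof (induction rule: rtrancl_induct)
    case base then show ?case by simp
  next
    case (step y z)
    show ?case
    proof (cases "(a,y) \<in> ?Ru\<^sup>*")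
      case True
      show ?thesis
      proof (cases "z = u")
        case True then show ?thesis by simp
      next
        case False
        show ?thesis
        proof (cases "y = u")
          case True then show ?thesis using step(2) by auto
        next
          case False
          hence "(y,z) \<in> ?Ru" using \<open>z \<noteq> u\<close> step(2) by (simp add: adj_del)
          then show ?thesis using \<open>(a,y) \<in> ?Ru\<^sup>*\<close> by (meson rtrancl_into_rtrancl)
        qed
      qed
    next
      case False
      then show ?thesis using step by (meson rtrancl_into_rtrancl)
    qed
  qed
  hence H: "(a,b) \<in> ?Ru\<^sup>* \<or> (u,b) \<in> ?Rx\<^sup>*" using assms(1) unfolding connected_in_def by blast
  have ab: "a \<in> V" "b \<in> V" "a \<noteq> x" "b \<noteq> x" using cav_V[OF assms(1)] by auto
  show ?thesis
  proof (cases "(a,b) \<in> ?Ru\<^sup>*")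
    case True
    show ?thesis
    proof (cases "b = u")
      case True then show ?thesis using ab by (auto intro: conn_refl simp: del_vertex_V_def)
    next
      case False
      then have "cav V E u a b" using True ab assms(3) by (auto simp: connected_in_def del_vertex_V_def)
      then show ?thesis using assms(2) by blast
    qed
  next
    case False
    hence u: "(u,b) \<in> ?Rx\<^sup>*" using H by blast
    have "u \<in> del_vertex_V V x" using rt_start[OF u] ab by (auto simp: del_vertex_V_def)
    then show ?thesis using u ab by (auto simp: connected_in_def del_vertex_V_def)
  qed
qed

definition par :: "'a set \<Rightarrow> 'a set set \<Rightarrow> 'a \<Rightarrow> 'a \<Rightarrow> 'a" where
  "par V E r v = (SOME x. {x,v} \<in> E \<and> cav V E v r x)"

context
  fixes V :: "'a set" and E r
  assumes tree: "is_tree V E" and rV: "r \<in> V"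
begin

lemma T1: "x \<in> V \<Longrightarrow> y \<in> V \<Longrightarrow> connected_in V E x y"
  using tree by (simp add: is_tree_def)

lemma finV: "finite V" using tree by (simp add: is_tree_def is_graph_def)

lemma T3: "{a,b} \<in> E \<Longrightarrow> a \<noteq> b \<and> a \<in> V \<and> b \<in> V"
proof -
  assume "{a,b} \<in> E"
  then obtain a' b' where "a' \<in> V" "b' \<in> V" "a' \<noteq> b'" "{a,b} = {a',b'}"
    using tree unfolding is_tree_def is_graph_def by blast
  then show ?thesis by (auto simp: doubleton_eq_iff)
qed

lemma bridge: "{a,b} \<in> E \<Longrightarrow> \<not> connected_in V (E - {{a,b}}) a b"
  using tree by (simp add: is_tree_def)

lemma par_unique:
  assumes "{x,v} \<in> E" "{x',v} \<in> E" "cav V E v r x" "cav V E v r x'"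
  shows "x = x'"
proof (rule ccontr)
  assume ne: "x \<noteq> x'"
  have "cav V E v x x'" using assms(3,4) by (meson conn_sym conn_trans)
  hence c1: "connected_in V (E - {{x,v}}) x x'" by (rule cav_mono) simp
  have "{x',v} \<noteq> {x,v}" using ne T3[OF assms(2)] by (auto simp: doubleton_eq_iff)
  hence "connected_in V (E - {{x,v}}) x' v" using T3[OF assms(2)] assms(2) by (intro conn_edge) auto
  with c1 have "connected_in V (E - {{x,v}}) x v" by (rule conn_trans)
  with bridge[OF assms(1)] show False by blast
qed

lemma par_prop: "v \<in> V \<Longrightarrow> v \<noteq> r \<Longrightarrow> {par V E r v, v} \<in> E \<and> cav V E v r (par V E r v)"
proof -
  assume "v \<in> V" "v \<noteq> r"
  then have "\<exists>x. {x,v} \<in> E \<and> cav V E v r x" using last_step[OF T1[OF rV \<open>v \<in> V\<close>]] by blast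
  then show ?thesis unfolding par_def by (rule someI_ex)
qed

lemma par_eq: assumes "v \<in> V" "v \<noteq> r" "{x,v} \<in> E" "cav V E v r x" shows "par V E r v = x"
proof -
  have p: "{par V E r v, v} \<in> E" "cav V E v r (par V E r v)" using par_prop[OF assms(1,2)] by auto
  show ?thesis using par_unique[OF p(1) assms(3) p(2) assms(4)] .
qed

lemma edge_par:
  assumes e: "{a,b} \<in> E"
  shows "(b \<noteq> r \<and> par V E r b = a) \<or> (a \<noteq> r \<and> par V E r a = b)"
proof -
  have ab: "a \<noteq> b" "a \<in> V" "b \<in> V" using T3[OF e] by auto
  have e': "{b,a} \<in> E" using e by (simp add: insert_commute)
  show ?thesis
  proof (cases "cav V E b r a")
    case True
    then have "b \<noteq> r" using cav_V[OF True] by auto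
    then show ?thesis using par_eq[OF ab(3) _ e True] by blast
  next
    case nba: False
    show ?thesis
    proof (cases "cav V E a r b")
      case True
      then have "a \<noteq> r" using cav_V[OF True] by auto
      then show ?thesis using par_eq[OF ab(2) _ e' True] by blast
    next
      case nab: False
      have ar: "a \<noteq> r"
      proof
        assume "a = r"
        have "r \<in> del_vertex_V V b" using ab rV \<open>a = r\<close> by (auto simp: del_vertex_V_def)
        then have "cav V E b r r" by (rule conn_refl)
        then have "cav V E b r a" using \<open>a = r\<close> by simp
        with nba show False by blast
      qed
      have br: "b \<noteq> r"
      proof
        assume "b = r"
        have "r \<in> del_vertex_V V a" using ab rV \<open>b = r\<close> by (auto simp: del_vertex_V_def)
        then have "cav V E a r r" by (rule conn_refl)
        then have "cav V E a r b" using \<open>b = r\<close> by simp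
        with nab show False by blast
      qed
      define x where "x = par V E r b"
      have x: "{x,b} \<in> E" "cav V E b r x" using par_prop[OF ab(3) br] x_def by auto
      have xa: "x \<noteq> a" using x nba by blast
      show ?thesis
      proof (cases "cav V E a r x")
        case True
        have "cav V E a x b" using x(1) T3[OF x(1)] xa ab by (intro cav_edge) auto
        then have "cav V E a r b" using True by (rule conn_trans[rotated])
        with nab show ?thesis by blast
      next
        case False
        have "cav V E b a x" using split_path[OF x(2) False ar[symmetric]] .
        then have "cav V E b r a" using x(2) by (meson conn_sym conn_trans)
        with nba show ?thesis by blast
      qed
    qed
  qed
qed

end

lemma cxru_lem:
  assumes tree: "is_tree V E" and rV: "r \<in> V" and uV: "u \<in> V" and ur: "u \<noteq> r"
    and nq: "\<not> cav V E u r q" and x1: "cav V E u q x" and x2: "{x,u} \<in> E"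
    and xr: "x \<noteq> r" and xu: "x \<noteq> u"
  shows "cav V E x r u"
proof -
  define y where "y = par V E r u"
  have pp: "{par V E r u, u} \<in> E \<and> cav V E u r (par V E r u)" by (rule par_prop[OF tree rV uV ur])
  have y1: "{y,u} \<in> E" using pp unfolding y_def by (rule conjunct1)
  have y2: "cav V E u r y" using pp unfolding y_def by (rule conjunct2)
  have yV: "y \<in> V" using T3[OF tree rV y1] by (rule conjunct2[THEN conjunct1])
  have qx: "cav V E u x q" using x1 by (rule conn_sym)
  have yx: "y \<noteq> x"
  proof
    assume "y = x"
    then have "cav V E u r x" using y2 by (rule subst)
    then have "cav V E u r q" using qx by (rule conn_trans)
    with nq show False by (rule notE)
  qed
  show ?thesis
  proof (cases "cav V E x r y")
    case True
    have "cav V E x y u" by (rule cav_edge[OF y1 yV uV yx xu[symmetric]])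
    with True show ?thesis by (rule conn_trans)
  next
    case False
    have "cav V E u x y" using split_path[OF y2 False xr[symmetric]] .
    then have "cav V E u y x" by (rule conn_sym)
    with y2 have "cav V E u r x" by (rule conn_trans)
    then have "cav V E u r q" using qx by (rule conn_trans)
    with nq show ?thesis by (rule notE)
  qed
qed

definition ch where "ch V E r Q u = {v \<in> VQ V E r Q. v \<noteq> r \<and> par V E r v = u}"

context
  fixes V :: "'a set" and E r Q
  assumes tree: "is_tree V E" and rV: "r \<in> V" and QV: "Q \<subseteq> V"
begin

lemma VQ_sub: "VQ V E r Q \<subseteq> V" by (auto simp: VQ_def)

lemma finVQ: "finite (VQ V E r Q)" using VQ_sub finV[OF tree rV] finite_subset by blast

lemma fin_ch: "finite (ch V E r Q u)" using finVQ by (simp add: ch_def)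

lemma deg_le:
  assumes uVQ: "u \<in> VQ V E r Q"
  shows "degree_in (induced_E E (VQ V E r Q)) u \<le> Suc (card (ch V E r Q u))"
proof -
  let ?VQ = "VQ V E r Q"
  have sub: "{e \<in> induced_E E ?VQ. u \<in> e} \<subseteq> insert {u, par V E r u} ((\<lambda>v. {v,u}) ` ch V E r Q u)"
  proof
    fix e assume "e \<in> {e \<in> induced_E E ?VQ. u \<in> e}"
    hence e: "e \<in> E" "e \<subseteq> ?VQ" "u \<in> e" by (auto simp: induced_E_def)
    have "\<forall>e\<in>E. \<exists>a b. a \<in> V \<and> b \<in> V \<and> a \<noteq> b \<and> e = {a, b}" using tree by (simp add: is_tree_def is_graph_def)
    then obtain a b where ab: "e = {a,b}" using e(1) by blast
    obtain w where w: "e = {u,w}"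
    proof (cases "u = a")
      case True then show ?thesis using that ab by blast
    next
      case False then have "u = b" using ab e(3) by auto
      then show ?thesis using that ab by (auto simp: insert_commute)
    qed
    have wVQ: "w \<in> ?VQ" using w e(2) by auto
    have "(w \<noteq> r \<and> par V E r w = u) \<or> (u \<noteq> r \<and> par V E r u = w)"
      using edge_par[OF tree rV, of u w] e(1) w by blast
    then show "e \<in> insert {u, par V E r u} ((\<lambda>v. {v,u}) ` ch V E r Q u)"
    proof
      assume "w \<noteq> r \<and> par V E r w = u"
      then have "w \<in> ch V E r Q u" using wVQ by (simp add: ch_def)
      moreover have "e = {w,u}" using w by (simp add: insert_commute)
      ultimately show ?thesis by blast
    next
      assume "u \<noteq> r \<and> par V E r u = w"
      then show ?thesis using w by simp
    qed
  qed
  have "degree_in (induced_E E ?VQ) u = card {e \<in> induced_E E ?VQ. u \<in> e}" by (simp add: degree_in_def)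
  also have "\<dots> \<le> card (insert {u, par V E r u} ((\<lambda>v. {v,u}) ` ch V E r Q u))"
    by (rule card_mono) (use fin_ch sub in auto)
  also have "\<dots> \<le> Suc (card ((\<lambda>v. {v,u}) ` ch V E r Q u))"
    using fin_ch by (simp add: card_insert_if)
  also have "\<dots> \<le> Suc (card (ch V E r Q u))" using card_image_le[OF fin_ch] by simp
  finally show ?thesis .
qed

lemma leaf:
  assumes uVQ: "u \<in> VQ V E r Q" and uQ: "u \<notin> Q" and ur: "u \<noteq> r"
  shows "ch V E r Q u \<noteq> {}"
proof -
  have "\<exists>q\<in>Q. in_subtree V E r u q" using uVQ unfolding VQ_def by simp
  then obtain q where q1: "q \<in> Q" and q2: "in_subtree V E r u q" by (rule bexE)
  have uV: "u \<in> V" using uVQ VQ_sub by (rule subsetD[rotated])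
  have qV: "q \<in> V" using q1 QV by (rule subsetD[rotated])
  have uq: "u \<noteq> q" using q1 uQ by metis
  have "u = r \<or> u = q \<or> \<not> cav V E u r q" using q2 unfolding in_subtree_def by (elim conjE)
  then have nq: "\<not> cav V E u r q" using uq ur by (elim disjE) (erule notE, assumption)+
  have qu: "q \<noteq> u" using uq by (rule not_sym)
  have "\<exists>x. cav V E u q x \<and> {x,u} \<in> E \<and> x \<in> V" by (rule last_step[OF T1[OF tree rV qV uV] qu])
  then obtain x where x1: "cav V E u q x" and x2: "{x,u} \<in> E" and x3: "x \<in> V" by (elim exE conjE)
  have xu: "x \<noteq> u" using T3[OF tree rV x2] by (rule conjunct1)
  have xr: "x \<noteq> r"
  proof
    assume "x = r"
    then have "cav V E u q r" using x1 by (rule subst)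
    then have "cav V E u r q" by (rule conn_sym)
    with nq show False by (rule notE)
  qed
  have cxru: "cav V E x r u" by (rule cxru_lem[OF tree rV uV ur nq x1 x2 xr xu])
  have ux: "{u,x} \<in> E" using x2 by (subst insert_commute)
  have px: "par V E r x = u" by (rule par_eq[OF tree rV x3 xr ux cxru])
  have sub: "x = r \<or> x = q \<or> \<not> cav V E x r q"
  proof (cases "x = q")
    case True then show ?thesis by (intro disjI2 disjI1)
  next
    case False
    have "\<not> cav V E x r q"
    proof
      assume "cav V E x r q"
      from split_path[OF this nq ur[symmetric]] have "cav V E x u q" .
      then have c1: "connected_in V (E - {{u,x}}) u q" by (rule cav_mono) (rule insertI2, rule singletonI)
      have c2: "connected_in V (E - {{u,x}}) q x" using x1 by (rule cav_mono) (rule insertI1)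
      have "connected_in V (E - {{u,x}}) u x" using c1 c2 by (rule conn_trans)
      with bridge[OF tree rV ux] show False by (rule notE)
    qed
    then show ?thesis by (intro disjI2)
  qed
  have "in_subtree V E r x q" unfolding in_subtree_def using x3 qV sub by (intro conjI)
  then have "x \<in> VQ V E r Q" unfolding VQ_def using x3 q1 by blast
  then have "x \<in> ch V E r Q u" unfolding ch_def using xr px by blast
  then show ?thesis by blast
qed

end

lemma cdt_walk:
  assumes "cdt V E W c D"
  shows "W \<subseteq> V \<Longrightarrow> finite V \<Longrightarrow> v \<in> W \<Longrightarrow>
     \<exists>p n. is_walk D p \<and> hd p = c \<and> last p = v \<and> length p = Suc n \<and> 2^n \<le> card W"
  using assms
proof (induction arbitrary: v rule: cdt.induct)
  case (step V E W c rt ed)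
  let ?CS = "{C \<in> components (del_vertex_V V c) (del_vertex_E E c). C \<inter> W \<noteq> {}}"
  let ?D = "\<Union>C \<in> ?CS. insert {c, rt C} (ed C)"
  have cW: "c \<in> W" using step(1) by (simp add: is_centroid_def)
  have finW: "finite W" using step.prems by (meson finite_subset)
  have "card W \<noteq> 0" using cW finW by auto
  hence c1: "1 \<le> card W" by linarith
  show ?case
  proof (cases "v = c")
    case True
    then show ?thesis
      by (intro exI[of _ "[c]"] exI[of _ 0]) (use c1 in \<open>auto simp: is_walk_def\<close>)
  next
    case False
    define C where "C = component (del_vertex_V V c) (del_vertex_E E c) v"
    have vV: "v \<in> del_vertex_V V c" using False step.prems by (auto simp: del_vertex_V_def)
    have vC: "v \<in> C" using vV by (simp add: C_def component_def connected_in_def)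
    have Ccomp: "C \<in> components (del_vertex_V V c) (del_vertex_E E c)"
      using vV by (simp add: C_def components_def)
    have CS: "C \<in> ?CS" using Ccomp vC step.prems by auto
    have CV: "C \<subseteq> V" using C_def by (auto simp: component_def connected_in_def del_vertex_V_def)
    have IH: "\<And>v. W \<inter> C \<subseteq> C \<Longrightarrow> finite C \<Longrightarrow> v \<in> W \<inter> C \<Longrightarrow>
     \<exists>p n. is_walk (ed C) p \<and> hd p = rt C \<and> last p = v \<and> length p = Suc n \<and> 2^n \<le> card (W \<inter> C)"
      using step(2) CS by blast
    obtain p n where p: "is_walk (ed C) p" "hd p = rt C" "last p = v" "length p = Suc n"
      "2^n \<le> card (W \<inter> C)"
      using IH[of v] vC step.prems CV finite_subset by blast
    have half: "2 * card (C \<inter> W) \<le> card W" using step(1) Ccomp by (simp add: is_centroid_def)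
    have sub: "ed C \<subseteq> ?D" "{c, rt C} \<in> ?D" using CS by auto
    have "is_walk ?D (c # p)"
      unfolding is_walk_def
    proof (intro conjI allI impI)
      fix i assume i: "Suc i < length (c # p)"
      show "{(c # p) ! i, (c # p) ! Suc i} \<in> ?D"
      proof (cases i)
        case 0
        then show ?thesis using p(2,4) sub(2) by (cases p) auto
      next
        case (Suc j)
        have e: "{p ! j, p ! Suc j} \<in> ed C" using p(1) i Suc unfolding is_walk_def by auto
        have eq: "{(c # p) ! i, (c # p) ! Suc i} = {p ! j, p ! Suc j}" by (simp add: Suc)
        show ?thesis unfolding eq using e by (rule subsetD[OF sub(1)])
      qed
    qed simp
    moreover have "last (c # p) = v" using p by auto
    moreover have "2 ^ Suc n \<le> card W" using p(5) half by (simp add: Int_commute)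
    ultimately show ?thesis using p(4) by (intro exI[of _ "c # p"] exI[of _ "Suc n"]) auto
  qed
qed

context
  fixes V :: "'a set" and E r Q
  assumes tree: "is_tree V E" and rV: "r \<in> V" and QV: "Q \<subseteq> V"
begin

lemma ind_sum: "finite A \<Longrightarrow> S \<subseteq> A \<Longrightarrow> (\<Sum>u\<in>A. (if u \<in> S then 1 else 0::nat)) = card S"
  by (simp add: sum.If_cases Int_absorb1)

lemma AQ_card: "card (AQ V E r Q) \<le> Suc (card Q)"
proof -
  let ?VQ = "VQ V E r Q"
  let ?ch = "ch V E r Q"
  define L where "L = {u \<in> ?VQ. ?ch u = {}}"
  define B where "B = {u \<in> ?VQ. 2 \<le> card (?ch u)}"
  have finQ: "finite Q" using QV finV[OF tree rV] finite_subset by blast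
  have fVQ: "finite ?VQ" by (rule finVQ[OF tree rV QV])
  have fch: "\<And>u. finite (?ch u)" by (rule fin_ch[OF tree rV QV])
  have AB: "AQ V E r Q \<subseteq> B"
  proof
    fix u assume "u \<in> AQ V E r Q"
    then have u: "u \<in> ?VQ" "3 \<le> degree_in (induced_E E ?VQ) u" by (simp_all add: AQ_def)
    then have "3 \<le> Suc (card (?ch u))" using deg_le[OF tree rV QV u(1)] by linarith
    then show "u \<in> B" using u(1) by (simp add: B_def)
  qed
  have LQ: "L \<subseteq> insert r Q" using leaf[OF tree rV QV] unfolding L_def by blast
  have "card L \<le> card (insert r Q)" by (rule card_mono) (use finQ LQ in auto)
  also have "\<dots> \<le> Suc (card Q)" using finQ by (simp add: card_insert_if)
  finally have cL: "card L \<le> Suc (card Q)" .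
  have disj: "\<forall>u\<in>?VQ. \<forall>u'\<in>?VQ. u \<noteq> u' \<longrightarrow> ?ch u \<inter> ?ch u' = {}" by (auto simp: ch_def)
  have "(\<Sum>u\<in>?VQ. card (?ch u)) = card (\<Union>u\<in>?VQ. ?ch u)"
    by (rule card_UN_disjoint[symmetric]) (use fVQ fch disj in auto)
  also have "\<dots> \<le> card ?VQ" by (rule card_mono[OF fVQ]) (auto simp: ch_def)
  finally have s1: "(\<Sum>u\<in>?VQ. card (?ch u)) \<le> card ?VQ" .
  have BV: "B \<subseteq> ?VQ" by (auto simp: B_def)
  have LV: "L \<subseteq> ?VQ" by (auto simp: L_def)
  have pw: "(if u \<in> B then 1 else 0) + 1 \<le> card (?ch u) + (if u \<in> L then 1 else 0)" if u: "u \<in> ?VQ" for u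
  proof (cases "u \<in> B")
    case True then show ?thesis by (simp add: B_def)
  next
    case nB: False
    show ?thesis
    proof (cases "u \<in> L")
      case True then show ?thesis using nB by simp
    next
      case False
      then have "?ch u \<noteq> {}" using u by (simp add: L_def)
      then have "card (?ch u) \<noteq> 0" using fch by simp
      then show ?thesis using nB False by simp
    qed
  qed
  have "(\<Sum>u\<in>?VQ. (if u \<in> B then 1 else 0) + 1) \<le> (\<Sum>u\<in>?VQ. card (?ch u) + (if u \<in> L then 1 else 0))"
    by (rule sum_mono) (rule pw)
  moreover have "(\<Sum>u\<in>?VQ. (if u \<in> B then 1 else 0) + 1) = card B + card ?VQ"
    by (simp only: sum.distrib ind_sum[OF fVQ BV]) simp
  moreover have "(\<Sum>u\<in>?VQ. card (?ch u) + (if u \<in> L then 1 else 0)) = (\<Sum>u\<in>?VQ. card (?ch u)) + card L"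
    by (simp only: sum.distrib ind_sum[OF fVQ LV])
  ultimately have "card B \<le> card L" using s1 by linarith
  moreover have "card (AQ V E r Q) \<le> card B" by (rule card_mono) (use fVQ AB in \<open>auto simp: B_def\<close>)
  ultimately show ?thesis using cL by linarith
qed

end

lemma height_bound:
  assumes "cdt V E W c D" "W \<subseteq> V" "finite V" "W \<noteq> {}"
  shows "2 ^ tree_height W D c \<le> card W"
proof -
  have finW: "finite W" using assms(2,3) finite_subset by blast
  have each: "2 ^ Defs.dist D c v \<le> card W" if v: "v \<in> W" for v
  proof -
    obtain p n where p: "is_walk D p" "hd p = c" "last p = v" "length p = Suc n" "2^n \<le> card W"
      using cdt_walk[OF assms(1) assms(2) assms(3) v] by blast
    have "Defs.dist D c v \<le> n" unfolding Defs.dist_def by (rule Least_le) (use p in blast)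
    then have "(2::nat) ^ Defs.dist D c v \<le> 2 ^ n" by (rule power_increasing) simp
    then show ?thesis using p(5) by linarith
  qed
  have "Max ((\<lambda>v. Defs.dist D c v) ` W) \<in> (\<lambda>v. Defs.dist D c v) ` W"
    by (rule Max_in) (use finW assms(4) in auto)
  then obtain v where "v \<in> W" "tree_height W D c = Defs.dist D c v" unfolding tree_height_def by blast
  then show ?thesis using each by simp
qed

theorem mainTheorem9:
  "\<exists>K::real. \<forall>(V::nat set) E r Q c D.
      is_tree V E \<longrightarrow> r \<in> V \<longrightarrow> Q \<subseteq> V \<longrightarrow> Q \<noteq> {} \<longrightarrow>
      cdt V E (Qprime V E r Q) c D \<longrightarrow>
      real (tree_height (Qprime V E r Q) D c) \<le> K * (1 + log 2 (real (card Q)))"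
proof (intro exI[of _ 2] allI impI)
  fix V :: "nat set" and E r Q c D
  assume tree: "is_tree V E" and rV: "r \<in> V" and QV: "Q \<subseteq> V" and Qne: "Q \<noteq> {}"
    and cd: "cdt V E (Qprime V E r Q) c D"
  let ?W = "Qprime V E r Q"
  let ?h = "tree_height ?W D c"
  have fV: "finite V" by (rule finV[OF tree rV])
  have finQ: "finite Q" using QV fV finite_subset by blast
  have WV: "?W \<subseteq> V" unfolding Qprime_def AQ_def VQ_def using QV by auto
  have Wne: "?W \<noteq> {}" using Qne by (auto simp: Qprime_def)
  have h: "2 ^ ?h \<le> card ?W" by (rule height_bound[OF cd WV fV Wne])
  have "card ?W \<le> card Q + card (AQ V E r Q)" unfolding Qprime_def by (rule card_Un_le)
  also have "\<dots> \<le> card Q + Suc (card Q)" using AQ_card[OF tree rV QV] by simp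
  finally have cW: "card ?W \<le> card Q + Suc (card Q)" .
  have cQ: "1 \<le> card Q" using finQ Qne by (simp add: Suc_le_eq card_gt_0_iff)
  have "2 ^ ?h \<le> 3 * card Q" using h cW cQ by linarith
  then have "real (2 ^ ?h) \<le> real (3 * card Q)" by (simp only: of_nat_le_iff)
  then have "(2::real) ^ ?h \<le> 3 * real (card Q)" by simp
  then have l1: "real ?h \<le> log 2 (3 * real (card Q))" by (rule le_log_of_power) simp
  have cQr: "0 < real (card Q)" using cQ by simp
  have l2: "log 2 (3 * real (card Q)) = log 2 3 + log 2 (real (card Q))"
    by (rule log_mult_pos) (use cQr in auto)
  have l3: "log 2 (3::real) \<le> 2" by (subst log_le_iff) auto
  have l4: "0 \<le> log 2 (real (card Q))" using cQ by simp
  have l5: "real ?h \<le> log 2 3 + log 2 (real (card Q))" using l1 unfolding l2 .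
  show "real ?h \<le> 2 * (1 + log 2 (real (card Q)))" using l5 l3 l4 by (simp add: algebra_simps)
qed

end
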